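(* Fix $0<\alpha<1$ and an integer $l\ge1$, let $\phi_\alpha(t)=t^{\alpha-1}E_{\alpha,\alpha}(-t^{\alpha})$ with Laplace convolution powers $\phi_\alpha^{*n}$. Then for every $w\in\mathbb{C}$ with $|w|\le1$ and $t>0$, $$t^{l\alpha-1}E^{l}_{\alpha,l\alpha}\big(-(1-w)t^{\alpha}\big)=\sum_{n=0}^{\infty}\frac{(l)_n}{n!}\,w^n\,\phi_\alpha^{*(n+l)}(t)=\sum_{n=0}^{\infty}\frac{(l)_n}{n!}\,w^n\,\frac{t^{\alpha l-1}t^{\alpha n}}{(n+l-1)!}E^{(n+l-1)}_{\alpha,\alpha}(-t^{\alpha}),$$ where $E^{(m)}_{\alpha,\alpha}(y)=\frac{d^m}{dy^m}E_{\alpha,\alpha}(y)$.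
   Context: $E^{\gamma}_{\alpha,\beta}(x)=\sum_{k\ge0}\frac{(\gamma)_k x^k}{\Gamma(\alpha k+\beta)\,k!}$ with Pochhammer symbol $(\gamma)_k=\gamma(\gamma+1)\cdots(\gamma+k-1)$, $(\gamma)_0=1$, and $E_{\alpha,\beta}=E^1_{\alpha,\beta}$. Laplace convolution $(f*g)(t)=\int_0^t f(t-u)g(u)\,du$, $\phi^{*1}=\phi$, $\phi^{*(n+1)}=\phi^{*n}*\phi$. *)

theory Defs
  imports "HOL-Analysis.Analysis"
begin

definition prabhakar :: "real \<Rightarrow> real \<Rightarrow> real \<Rightarrow> complex \<Rightarrow> complex" where
  "prabhakar \<gamma> \<alpha> \<beta> x =
     (\<Sum>k. pochhammer (complex_of_real \<gamma>) k * x ^ k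
            / (complex_of_real (Gamma (\<alpha> * real k + \<beta>)) * fact k))"

definition ML2 :: "real \<Rightarrow> real \<Rightarrow> complex \<Rightarrow> complex" where
  "ML2 \<alpha> \<beta> = prabhakar 1 \<alpha> \<beta>"

definition lconv :: "(real \<Rightarrow> complex) \<Rightarrow> (real \<Rightarrow> complex) \<Rightarrow> real \<Rightarrow> complex" where
  "lconv f g t = integral {0..t} (\<lambda>u. f (t - u) * g u)"

text \<open>Convolution powers: phi^{*1} = phi, phi^{*(n+1)} = phi^{*n} * phi
  (the value at index 0 is irrelevant and set to phi).\<close>
fun conv_pow :: "(real \<Rightarrow> complex) \<Rightarrow> nat \<Rightarrow> real \<Rightarrow> complex" where
  "conv_pow \<phi> 0 = \<phi>"
| "conv_pow \<phi> (Suc 0) = \<phi>"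
| "conv_pow \<phi> (Suc (Suc n)) = lconv (conv_pow \<phi> (Suc n)) \<phi>"

definition phi_ml :: "real \<Rightarrow> real \<Rightarrow> complex" where
  "phi_ml \<alpha> t = complex_of_real (t powr (\<alpha> - 1)) * ML2 \<alpha> \<alpha> (- complex_of_real (t powr \<alpha>))"

end

theory Submission
  imports Defs "HOL-Real_Asymp.Real_Asymp" "HOL-Computational_Algebra.Formal_Power_Series"
begin

lemma Gamma_shift_lower:
  fixes x a :: real
  assumes a: "0 < a" "a < 1" and x: "x + a - 1 > 0"
  shows "(x + a - 1) powr a * Gamma x \<le> Gamma (x + a)"
proof -
  have c: "(ln \<circ> Gamma) ((1 - (1 - a)) *\<^sub>R (x + a - 1) + (1 - a) *\<^sub>R (x + a))
      \<le> (1 - (1 - a)) * (ln \<circ> Gamma) (x + a - 1) + (1 - a) * (ln \<circ> Gamma) (x + a)"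
    by (rule convex_onD[OF log_convex_Gamma_real]) (use a x in auto)
  have e: "(1 - (1 - a)) *\<^sub>R (x + a - 1) + (1 - a) *\<^sub>R (x + a) = x"
    by (simp add: algebra_simps)
  have g: "Gamma (x + a) = (x + a - 1) * Gamma (x + a - 1)"
  proof -
    have "x + a - 1 \<notin> \<int>\<^sub>\<le>\<^sub>0" using x by (auto elim!: nonpos_Ints_cases)
    thus ?thesis using Gamma_plus1[of "x + a - 1"] by simp
  qed
  have p1: "Gamma (x + a - 1) > 0" using x by simp
  have lg: "ln (Gamma (x + a)) = ln (x + a - 1) + ln (Gamma (x + a - 1))"
    unfolding g using p1 x by (simp add: ln_mult_pos)
  from c have "ln (Gamma x) \<le> a * ln (Gamma (x + a - 1)) + (1 - a) * ln (Gamma (x + a))"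
    unfolding e by simp
  also have "\<dots> = ln (Gamma (x + a)) - a * ln (x + a - 1)"
    using lg by (simp add: algebra_simps)
  finally have "a * ln (x + a - 1) + ln (Gamma x) \<le> ln (Gamma (x + a))" by simp
  hence "exp (a * ln (x + a - 1) + ln (Gamma x)) \<le> exp (ln (Gamma (x + a)))" by simp
  thus ?thesis using x a by (simp add: exp_add powr_def)
qed

definition pc :: "real \<Rightarrow> real \<Rightarrow> real \<Rightarrow> nat \<Rightarrow> real" where
  "pc g a b k = pochhammer g k / (Gamma (a * real k + b) * fact k)"

lemma pc_pos: "g > 0 \<Longrightarrow> a > 0 \<Longrightarrow> b > 0 \<Longrightarrow> pc g a b k > 0"
  unfolding pc_def by (intro divide_pos_pos mult_pos_pos pochhammer_pos Gamma_real_pos) (auto intro: add_nonneg_pos)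

lemma pc_summable:
  assumes g: "g > 0" and a: "0 < a" "a < 1" and b: "b > 0" and r: "r \<ge> 0"
  shows "summable (\<lambda>k. pc g a b k * r ^ k)"
proof -
  define M where "M = 2 * (r + 1) * (g + 1)"
  have lim: "filterlim (\<lambda>k::nat. (a * real k + b + a - 1) powr a) at_top at_top"
    using a by real_asymp
  have ev: "eventually (\<lambda>k::nat. (a * real k + b + a - 1) powr a \<ge> M \<and> a * real k + b + a - 1 > 0) at_top"
  proof -
    have "eventually (\<lambda>k::nat. a * real k + b + a - 1 > 0) at_top" using a by real_asymp
    thus ?thesis using lim[unfolded filterlim_at_top] by (auto elim: eventually_elim2)
  qed
  then obtain N where N: "\<And>k. k \<ge> N \<Longrightarrow> (a * real k + b + a - 1) powr a \<ge> M \<and> a * real k + b + a - 1 > 0"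
    by (auto simp: eventually_at_top_linorder)
  show ?thesis
  proof (rule summable_ratio_test[of "1/2" N])
    fix k assume k: "k \<ge> N"
    have M: "(a * real k + b + a - 1) powr a \<ge> M" and pos: "a * real k + b + a - 1 > 0" using N[OF k] by auto
    have G: "(a * real k + b + a - 1) powr a * Gamma (a * real k + b) \<le> Gamma (a * real (Suc k) + b)"
      using Gamma_shift_lower[of a "a * real k + b"] a pos by (simp add: algebra_simps)
    have Gp: "Gamma (a * real k + b) > 0" using a b by (intro Gamma_real_pos add_nonneg_pos) auto
    have Gp1: "Gamma (a * real (Suc k) + b) > 0" using a b by (intro Gamma_real_pos add_nonneg_pos) auto
    have pk: "pochhammer g k > 0" using g by (simp add: pochhammer_pos)
    have Mp: "M > 0" unfolding M_def using g r by simp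
    have "pc g a b (Suc k) * r ^ Suc k
        = pochhammer g k * (g + real k) / (Gamma (a * real (Suc k) + b) * (fact k * (real k + 1))) * r ^ k * r"
      unfolding pc_def by (simp add: pochhammer_Suc algebra_simps)
    also have "\<dots> \<le> pochhammer g k * (g + real k) / (M * Gamma (a * real k + b) * (fact k * (real k + 1))) * r ^ k * r"
    proof -
      have "M * Gamma (a * real k + b) \<le> Gamma (a * real (Suc k) + b)"
        using G M Gp by (meson mult_right_mono less_imp_le order_trans)
      hence "M * Gamma (a * real k + b) * (fact k * (real k + 1)) \<le> Gamma (a * real (Suc k) + b) * (fact k * (real k + 1))"
        by (intro mult_right_mono) auto
      thus ?thesis using pk g r Gp Mp Gp1
        by (intro mult_right_mono divide_left_mono) (auto intro!: mult_pos_pos)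
    qed
    also have "\<dots> = (pc g a b k * r ^ k) * ((g + real k) * r / (M * (real k + 1)))"
      unfolding pc_def by (simp add: field_simps)
    also have "\<dots> \<le> (pc g a b k * r ^ k) * (1/2)"
    proof (rule mult_left_mono)
      have "(g + real k) * r \<le> (g + 1) * (real k + 1) * (r + 1)"
        using g r by (intro mult_mono) (auto simp: algebra_simps mult_nonneg_nonneg)
      also have "\<dots> = M * (real k + 1) / 2" unfolding M_def by simp
      finally show "(g + real k) * r / (M * (real k + 1)) \<le> 1/2" using Mp
        by (simp add: divide_simps)
      show "0 \<le> pc g a b k * r ^ k" using pc_pos[of g a b k] g a b r by simp
    qed
    finally show "norm (pc g a b (Suc k) * r ^ Suc k) \<le> 1/2 * norm (pc g a b k * r ^ k)"
      using pc_pos[of g a b k] pc_pos[of g a b "Suc k"] g a b r by (simp add: abs_mult)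
  qed simp
qed


lemma beta_interval:
  fixes p q t :: real
  assumes p: "p > -1" and q: "q > -1" and t: "t > 0"
  shows "((\<lambda>u. (t - u) powr p * u powr q) has_integral (Beta (p + 1) (q + 1) * t powr (p + q + 1))) {0..t}"
proof -
  define f where "f = (\<lambda>s::real. s powr (q + 1 - 1) * (1 - s) powr (p + 1 - 1))"
  have B: "(f has_integral Beta (q + 1) (p + 1)) {0..1}"
    unfolding f_def by (rule has_integral_Beta_real) (use p q in auto)
  have S: "((\<lambda>x. f ((1/t) * x)) has_integral (1 / \<bar>1/t\<bar>) *\<^sub>R Beta (q + 1) (p + 1)) ((\<lambda>x. x / (1/t)) ` {0..1})"
    by (rule has_integral_stretch_real[OF B]) (use t in auto)
  have img: "(\<lambda>x. x / (1/t)) ` {0..1} = {0..t}"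
  proof (rule set_eqI, rule iffI)
    fix y assume "y \<in> (\<lambda>x. x / (1/t)) ` {0..1}" thus "y \<in> {0..t}" using t by (auto simp: mult_le_cancel_right1)
  next
    fix y assume y: "y \<in> {0..t}"
    hence "y / t \<in> {0..1}" using t by (auto simp: divide_simps)
    moreover have "y = (y / t) / (1 / t)" using t by simp
    ultimately show "y \<in> (\<lambda>x. x / (1/t)) ` {0..1}" by blast
  qed
  have S': "((\<lambda>x. t powr (p + q) * f ((1/t) * x)) has_integral (t powr (p + q) * (t * Beta (q + 1) (p + 1)))) {0..t}"
    using has_integral_mult_right[OF S[unfolded img], of "t powr (p + q)"] t by simp
  have V: "t powr (p + q) * (t * Beta (q + 1) (p + 1)) = Beta (p + 1) (q + 1) * t powr (p + q + 1)"
      using t by (simp add: Beta_commute powr_add)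
  show ?thesis unfolding V[symmetric]
  proof (rule has_integral_eq[OF _ S'])
    fix u assume u: "u \<in> {0..t}"
    show "t powr (p + q) * f (1 / t * u) = (t - u) powr p * u powr q"
    proof -
      have "t powr (p + q) * f (1 / t * u) = (t powr q * (u / t) powr q) * (t powr p * (1 - u / t) powr p)"
        unfolding f_def by (simp add: powr_add)
      also have "t powr q * (u / t) powr q = u powr q"
        using t u by (simp add: powr_mult[symmetric])
      also have "t powr p * (1 - u / t) powr p = (t - u) powr p"
      proof -
        have "t * (1 - u / t) = t - u" using t by (simp add: field_simps)
        thus ?thesis using t u by (simp add: powr_mult[symmetric])
      qed
      finally show ?thesis by simp
    qed
  qed
qed


lemma Beta_pos_real: "x > 0 \<Longrightarrow> y > 0 \<Longrightarrow> Beta x y > (0::real)"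
  unfolding Beta_def by simp

lemma conv_series:
  fixes a b p q :: "nat \<Rightarrow> real" and t :: real
  assumes t: "t > 0" and p: "\<And>i. p i > -1" and q: "\<And>k. q k > -1"
    and sa: "\<And>x. x \<in> {0..t} \<Longrightarrow> summable (\<lambda>i. \<bar>a i\<bar> * x powr p i)"
    and sb: "\<And>x. x \<in> {0..t} \<Longrightarrow> summable (\<lambda>k. \<bar>b k\<bar> * x powr q k)"
    and S: "summable (\<lambda>m. \<Sum>i\<le>m. \<bar>a i\<bar> * \<bar>b (m - i)\<bar> * (Beta (p i + 1) (q (m - i) + 1) * t powr (p i + q (m - i) + 1)))"
  shows "((\<lambda>u. (\<Sum>i. a i * (t - u) powr p i) * (\<Sum>k. b k * u powr q k)) has_integral
          (\<Sum>m. \<Sum>i\<le>m. a i * b (m - i) * (Beta (p i + 1) (q (m - i) + 1) * t powr (p i + q (m - i) + 1)))) {0..t}"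
proof -
  define K where "K i k = Beta (p i + 1) (q k + 1) * t powr (p i + q k + 1)" for i k
  have K0: "K i k \<ge> 0" for i k
    unfolding K_def using p[of i] q[of k] by (intro mult_nonneg_nonneg less_imp_le[OF Beta_pos_real]) auto
  define h where "h m u = (\<Sum>i\<le>m. a i * b (m - i) * ((t - u) powr p i * u powr q (m - i)))" for m u
  define H where "H m u = (\<Sum>i\<le>m. \<bar>a i\<bar> * \<bar>b (m - i)\<bar> * ((t - u) powr p i * u powr q (m - i)))" for m u
  define I where "I m = (\<Sum>i\<le>m. a i * b (m - i) * K i (m - i))" for m
  define J where "J m = (\<Sum>i\<le>m. \<bar>a i\<bar> * \<bar>b (m - i)\<bar> * K i (m - i))" for m
  define F where "F u = (\<Sum>i. a i * (t - u) powr p i) * (\<Sum>k. b k * u powr q k)" for u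
  define G where "G u = (\<Sum>i. \<bar>a i\<bar> * (t - u) powr p i) * (\<Sum>k. \<bar>b k\<bar> * u powr q k)" for u
  have bi: "((\<lambda>u. (t - u) powr p i * u powr q k) has_integral K i k) {0..t}" for i k
    unfolding K_def using beta_interval[OF p[of i] q[of k] t] by simp
  have hint: "(h m has_integral I m) {0..t}" for m
    unfolding h_def[abs_def] I_def by (intro has_integral_sum has_integral_mult_right bi) auto
  have Hint: "(H m has_integral J m) {0..t}" for m
    unfolding H_def[abs_def] J_def by (intro has_integral_sum has_integral_mult_right bi) auto
  have J0: "J m \<ge> 0" for m unfolding J_def using K0 by (intro sum_nonneg) auto
  have H0: "H m u \<ge> 0" for m u unfolding H_def by (intro sum_nonneg) auto
  have hH: "\<bar>h m u\<bar> \<le> H m u" for m u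
    unfolding h_def H_def by (rule order_trans[OF sum_abs sum_mono]) (auto simp: abs_mult)
  have IJ: "\<bar>I m\<bar> \<le> J m" for m
    unfolding I_def J_def using K0 by (intro order_trans[OF sum_abs sum_mono]) (auto simp: abs_mult)
  have SJ: "summable J" using S unfolding J_def K_def .
  have SI: "summable I" by (rule summable_comparison_test[OF _ SJ]) (use IJ in auto)
  have hsum: "(\<lambda>m. h m u) sums F u" if u: "u \<in> {0..t}" for u
  proof -
    have 1: "summable (\<lambda>i. norm (a i * (t - u) powr p i))" using sa[of "t - u"] u by (simp add: abs_mult)
    have 2: "summable (\<lambda>k. norm (b k * u powr q k))" using sb[of u] u by (simp add: abs_mult)
    show ?thesis using Cauchy_product_sums[OF 1 2] unfolding F_def h_def by (simp add: mult_ac)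
  qed
  have Hsum: "(\<lambda>m. H m u) sums G u" if u: "u \<in> {0..t}" for u
  proof -
    have 1: "summable (\<lambda>i. norm (\<bar>a i\<bar> * (t - u) powr p i))" using sa[of "t - u"] u by (simp add: abs_mult)
    have 2: "summable (\<lambda>k. norm (\<bar>b k\<bar> * u powr q k))" using sb[of u] u by (simp add: abs_mult)
    show ?thesis using Cauchy_product_sums[OF 1 2] unfolding G_def H_def by (simp add: mult_ac)
  qed
  have Gint: "G integrable_on {0..t}"
  proof -
    have "G integrable_on {0..t} \<and> ((\<lambda>N. integral {0..t} (\<lambda>u. \<Sum>m<N. H m u)) \<longlonglongrightarrow> integral {0..t} G)"
    proof (rule monotone_convergence_increasing)
      fix N show "(\<lambda>u. \<Sum>m<N. H m u) integrable_on {0..t}"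
        using Hint by (intro integrable_sum) (auto simp: integrable_on_def)
    next
      fix N u assume "u \<in> {0..t}" show "(\<Sum>m<N. H m u) \<le> (\<Sum>m<Suc N. H m u)" using H0 by simp
    next
      fix u assume "u \<in> {0..t}" thus "(\<lambda>N. \<Sum>m<N. H m u) \<longlonglongrightarrow> G u" using Hsum by (simp add: sums_def)
    next
      have eq: "integral {0..t} (\<lambda>u. \<Sum>m<N. H m u) = (\<Sum>m<N. J m)" for N
        using Hint by (intro integral_unique has_integral_sum) auto
      have "\<bar>\<Sum>m<N. J m\<bar> \<le> suminf J" for N
        using J0 SJ by (simp add: sum_nonneg sum_le_suminf)
      thus "bounded (range (\<lambda>N. integral {0..t} (\<lambda>u. \<Sum>m<N. H m u)))"
        unfolding eq bounded_iff
      proof (intro exI[of _ "suminf J"] ballI)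
        fix x assume "x \<in> range (\<lambda>N. \<Sum>m<N. J m)"
        then obtain N where "x = (\<Sum>m<N. J m)" by auto
        thus "norm x \<le> suminf J" using \<open>\<And>N. \<bar>\<Sum>m<N. J m\<bar> \<le> suminf J\<close> by simp
      qed
    qed
    thus ?thesis by simp
  qed
  have "(F has_integral suminf I) {0..t}"
  proof (rule has_integral_dominated_convergence[where f = "\<lambda>N u. \<Sum>m<N. h m u" and y = "\<lambda>N. \<Sum>m<N. I m"])
    show "((\<lambda>u. \<Sum>m<N. h m u) has_integral (\<Sum>m<N. I m)) {0..t}" for N
      using hint by (intro has_integral_sum) auto
    show "G integrable_on {0..t}" by (rule Gint)
    show "\<forall>u\<in>{0..t}. norm (\<Sum>m<N. h m u) \<le> G u" for N
    proof
      fix u assume u: "u \<in> {0..t}"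
      have "norm (\<Sum>m<N. h m u) \<le> (\<Sum>m<N. H m u)"
        unfolding real_norm_def by (rule order_trans[OF sum_abs sum_mono]) (use hH in auto)
      also have "\<dots> \<le> (\<Sum>m. H m u)"
        by (rule sum_le_suminf) (use Hsum[OF u] H0 in \<open>auto simp: sums_iff\<close>)
      also have "\<dots> = G u" using Hsum[OF u] by (simp add: sums_iff)
      finally show "norm (\<Sum>m<N. h m u) \<le> G u" .
    qed
    show "\<forall>u\<in>{0..t}. (\<lambda>N. \<Sum>m<N. h m u) \<longlonglongrightarrow> F u" using hsum by (simp add: sums_def)
    show "(\<lambda>N. \<Sum>m<N. I m) \<longlonglongrightarrow> suminf I" using SI by (simp add: summable_LIMSEQ)
  qed
  thus ?thesis unfolding F_def[abs_def] I_def K_def .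
qed


lemma powr_comb: "(x::real) \<ge> 0 \<Longrightarrow> x powr (b - 1) * (x powr a) ^ k = x powr (a * real k + b - 1)"
proof (cases "x = 0")
  case False
  assume "x \<ge> 0"
  hence "x > 0" using False by simp
  thus ?thesis by (simp add: powr_power powr_add[symmetric] algebra_simps)
qed simp

definition pfr :: "real \<Rightarrow> real \<Rightarrow> real \<Rightarrow> real \<Rightarrow> real" where
  "pfr g a b x = (\<Sum>k. pc g a b k * (-1) ^ k * x powr (a * real k + b - 1))"

lemma pfr_sums:
  assumes g: "g > 0" and a: "0 < a" "a < 1" and b: "b > 0" and x: "x \<ge> 0"
  shows "(\<lambda>k. pc g a b k * (-1) ^ k * x powr (a * real k + b - 1)) sums pfr g a b x"
    and "summable (\<lambda>k. \<bar>pc g a b k * (-1) ^ k * x powr (a * real k + b - 1)\<bar>)"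
proof -
  have s: "summable (\<lambda>k. pc g a b k * (x powr a) ^ k)" by (rule pc_summable) (use assms in auto)
  have s2: "summable (\<lambda>k. x powr (b - 1) * (pc g a b k * (x powr a) ^ k))" by (rule summable_mult[OF s])
  have eq: "\<bar>pc g a b k * (-1) ^ k * x powr (a * real k + b - 1)\<bar> = x powr (b - 1) * (pc g a b k * (x powr a) ^ k)" for k
    using pc_pos[OF g a(1) b, of k] x powr_comb[OF x, of b a k] by (simp add: abs_mult)
  show "summable (\<lambda>k. \<bar>pc g a b k * (-1) ^ k * x powr (a * real k + b - 1)\<bar>)" using s2 unfolding eq .
  hence "summable (\<lambda>k. pc g a b k * (-1) ^ k * x powr (a * real k + b - 1))" by (rule summable_rabs_cancel)
  thus "(\<lambda>k. pc g a b k * (-1) ^ k * x powr (a * real k + b - 1)) sums pfr g a b x"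
    unfolding pfr_def by (rule summable_sums)
qed

lemma prab_pfr:
  assumes g: "g > 0" and a: "0 < a" "a < 1" and b: "b > 0" and x: "x \<ge> 0"
  shows "complex_of_real (x powr (b - 1)) * prabhakar g a b (- complex_of_real (x powr a)) = complex_of_real (pfr g a b x)"
proof -
  have tm: "complex_of_real (x powr (b - 1)) * (pochhammer (complex_of_real g) k * (- complex_of_real (x powr a)) ^ k
            / (complex_of_real (Gamma (a * real k + b)) * fact k))
      = complex_of_real (pc g a b k * (-1) ^ k * x powr (a * real k + b - 1))" for k
  proof -
    have "complex_of_real (pc g a b k * (-1) ^ k * x powr (a * real k + b - 1))
        = complex_of_real (pochhammer g k * (-1) ^ k * (x powr (b - 1) * (x powr a) ^ k) / (Gamma (a * real k + b) * fact k))"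
      unfolding pc_def powr_comb[OF x] by simp
    also have "\<dots> = complex_of_real (x powr (b - 1)) * (pochhammer (complex_of_real g) k * (- complex_of_real (x powr a)) ^ k
            / (complex_of_real (Gamma (a * real k + b)) * fact k))"
      by (simp add: pochhammer_of_real[symmetric] power_minus' field_simps)
    finally show ?thesis by simp
  qed
  have "(\<lambda>k. complex_of_real (pc g a b k * (-1) ^ k * x powr (a * real k + b - 1))) sums complex_of_real (pfr g a b x)"
    by (rule sums_of_real[OF pfr_sums(1)[OF assms]])
  hence S: "(\<lambda>k. complex_of_real (x powr (b - 1)) * (pochhammer (complex_of_real g) k * (- complex_of_real (x powr a)) ^ k
            / (complex_of_real (Gamma (a * real k + b)) * fact k))) sums complex_of_real (pfr g a b x)"
    unfolding tm .
  show ?thesis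
  proof (cases "x = 0")
    case True
    have "pfr g a b x = 0" using sums_unique[OF pfr_sums(1)[OF assms]] True by simp
    thus ?thesis using True by simp
  next
    case False
    hence nz: "complex_of_real (x powr (b - 1)) \<noteq> 0" using x by simp
    have "(\<lambda>k. pochhammer (complex_of_real g) k * (- complex_of_real (x powr a)) ^ k
            / (complex_of_real (Gamma (a * real k + b)) * fact k)) sums (complex_of_real (pfr g a b x) / complex_of_real (x powr (b - 1)))"
      using sums_divide[OF S, of "complex_of_real (x powr (b - 1))"] nz by simp
    hence "prabhakar g a b (- complex_of_real (x powr a)) = complex_of_real (pfr g a b x) / complex_of_real (x powr (b - 1))"
      unfolding prabhakar_def by (rule sums_unique[symmetric])
    thus ?thesis using nz by simp
  qed
qed

lemma vandermonde_poch:
  fixes g1 g2 :: real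
  shows "(\<Sum>i\<le>m. pochhammer g1 i / fact i * (pochhammer g2 (m - i) / fact (m - i))) = pochhammer (g1 + g2) m / fact m"
proof -
  have V: "(\<Sum>k\<in>{0..m}. ((- g1) gchoose k) * ((- g2) gchoose (m - k))) = (- g1 + - g2) gchoose m"
    by (rule gbinomial_Vandermonde)
  have "(\<Sum>k\<in>{0..m}. ((- g1) gchoose k) * ((- g2) gchoose (m - k)))
      = (\<Sum>k\<le>m. (-1) ^ m * (pochhammer g1 k / fact k * (pochhammer g2 (m - k) / fact (m - k))))"
  proof (rule sum.cong)
    fix k assume k: "k \<in> {..m}"
    have "(-1::real) ^ k * (-1) ^ (m - k) = (-1) ^ m" using k by (simp add: power_add[symmetric])
    thus "((- g1) gchoose k) * ((- g2) gchoose (m - k)) = (-1) ^ m * (pochhammer g1 k / fact k * (pochhammer g2 (m - k) / fact (m - k)))"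
      unfolding gbinomial_pochhammer by (simp add: field_simps)
  qed (auto simp: atLeast0AtMost)
  also have "\<dots> = (-1) ^ m * (\<Sum>k\<le>m. pochhammer g1 k / fact k * (pochhammer g2 (m - k) / fact (m - k)))"
    by (simp add: sum_distrib_left)
  finally have "(-1) ^ m * (\<Sum>k\<le>m. pochhammer g1 k / fact k * (pochhammer g2 (m - k) / fact (m - k))) = (-1) ^ m * (pochhammer (g1 + g2) m / fact m)"
    using V unfolding gbinomial_pochhammer by (simp add: algebra_simps)
  moreover have "(-1::real)^m \<noteq> 0" by simp
  ultimately show ?thesis by (metis mult_left_cancel)
qed


lemma coef_eq:
  assumes g: "g1 > 0" "g2 > 0" and a: "0 < a" and b: "b1 > 0" "b2 > 0" and im: "i \<le> m"
  shows "pc g1 a b1 i * pc g2 a b2 (m - i) * (Beta (a * real i + b1 - 1 + 1) (a * real (m - i) + b2 - 1 + 1)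
           * t powr (a * real i + b1 - 1 + (a * real (m - i) + b2 - 1) + 1))
       = pochhammer g1 i / fact i * (pochhammer g2 (m - i) / fact (m - i)) * (t powr (a * real m + (b1 + b2) - 1) / Gamma (a * real m + (b1 + b2)))"
proof -
  have e1: "a * real i + b1 - 1 + (a * real (m - i) + b2 - 1) + 1 = a * real m + (b1 + b2) - 1"
    using im by (simp add: of_nat_diff algebra_simps)
  have e2: "a * real i + b1 + (a * real (m - i) + b2) = a * real m + (b1 + b2)"
    using im by (simp add: of_nat_diff algebra_simps)
  have G1: "Gamma (a * real i + b1) > 0" using a b by (intro Gamma_real_pos add_nonneg_pos) auto
  have G2: "Gamma (a * real (m - i) + b2) > 0" using a b by (intro Gamma_real_pos add_nonneg_pos) auto
  have Bt: "Beta (a * real i + b1 - 1 + 1) (a * real (m - i) + b2 - 1 + 1)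
      = Gamma (a * real i + b1) * Gamma (a * real (m - i) + b2) / Gamma (a * real m + (b1 + b2))"
    unfolding Beta_def by (simp only: diff_add_cancel e2)
  show ?thesis unfolding e1 Bt pc_def using G1 G2 by (simp add: field_simps)
qed

lemma pfr_conv:
  assumes g: "g1 > 0" "g2 > 0" and a: "0 < a" "a < 1" and b: "b1 > 0" "b2 > 0" and t: "t > 0"
  shows "((\<lambda>u. pfr g1 a b1 (t - u) * pfr g2 a b2 u) has_integral pfr (g1 + g2) a (b1 + b2) t) {0..t}"
proof -
  define A where "A i = pc g1 a b1 i * (-1) ^ i" for i
  define B where "B k = pc g2 a b2 k * (-1) ^ k" for k
  define P where "P i = a * real i + b1 - 1" for i
  define Q where "Q k = a * real k + b2 - 1" for k
  define C where "C m = t powr (a * real m + (b1 + b2) - 1) / Gamma (a * real m + (b1 + b2))" for m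
  have absA: "\<bar>A i\<bar> = pc g1 a b1 i" for i unfolding A_def using pc_pos[OF g(1) a(1) b(1), of i] by (simp add: abs_mult)
  have absB: "\<bar>B i\<bar> = pc g2 a b2 i" for i unfolding B_def using pc_pos[OF g(2) a(1) b(2), of i] by (simp add: abs_mult)
  have pf1: "pfr g1 a b1 x = (\<Sum>i. A i * x powr P i)" for x unfolding pfr_def A_def P_def ..
  have pf2: "pfr g2 a b2 x = (\<Sum>i. B i * x powr Q i)" for x unfolding pfr_def B_def Q_def ..
  have inner_abs: "(\<Sum>i\<le>m. \<bar>A i\<bar> * \<bar>B (m - i)\<bar> * (Beta (P i + 1) (Q (m - i) + 1) * t powr (P i + Q (m - i) + 1)))
      = pc (g1 + g2) a (b1 + b2) m * t powr (a * real m + (b1 + b2) - 1)" for m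
  proof -
    have "(\<Sum>i\<le>m. \<bar>A i\<bar> * \<bar>B (m - i)\<bar> * (Beta (P i + 1) (Q (m - i) + 1) * t powr (P i + Q (m - i) + 1)))
        = (\<Sum>i\<le>m. pochhammer g1 i / fact i * (pochhammer g2 (m - i) / fact (m - i)) * C m)"
      unfolding absA absB P_def Q_def C_def by (intro sum.cong refl coef_eq) (use g a b in auto)
    also have "\<dots> = (\<Sum>i\<le>m. pochhammer g1 i / fact i * (pochhammer g2 (m - i) / fact (m - i))) * C m"
      by (rule sum_distrib_right[symmetric])
    also have "\<dots> = pochhammer (g1 + g2) m / fact m * C m"
      by (simp only: vandermonde_poch)
    also have "\<dots> = pc (g1 + g2) a (b1 + b2) m * t powr (a * real m + (b1 + b2) - 1)"
      unfolding C_def pc_def by simp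
    finally show ?thesis .
  qed
  have inner: "(\<Sum>i\<le>m. A i * B (m - i) * (Beta (P i + 1) (Q (m - i) + 1) * t powr (P i + Q (m - i) + 1)))
      = pc (g1 + g2) a (b1 + b2) m * (-1) ^ m * t powr (a * real m + (b1 + b2) - 1)" for m
  proof -
    have "(\<Sum>i\<le>m. A i * B (m - i) * (Beta (P i + 1) (Q (m - i) + 1) * t powr (P i + Q (m - i) + 1)))
        = (\<Sum>i\<le>m. (-1) ^ m * (\<bar>A i\<bar> * \<bar>B (m - i)\<bar> * (Beta (P i + 1) (Q (m - i) + 1) * t powr (P i + Q (m - i) + 1))))"
    proof (intro sum.cong refl)
      fix i assume "i \<in> {..m}"
      hence h: "(-1::real) ^ i * (-1) ^ (m - i) = (-1) ^ m" by (simp add: power_add[symmetric])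
      have "A i * B (m - i) * (Beta (P i + 1) (Q (m - i) + 1) * t powr (P i + Q (m - i) + 1))
          = ((-1::real) ^ i * (-1) ^ (m - i)) * (pc g1 a b1 i * pc g2 a b2 (m - i) * (Beta (P i + 1) (Q (m - i) + 1) * t powr (P i + Q (m - i) + 1)))"
        unfolding A_def B_def by (simp only: mult_ac)
      thus "A i * B (m - i) * (Beta (P i + 1) (Q (m - i) + 1) * t powr (P i + Q (m - i) + 1))
          = (-1) ^ m * (\<bar>A i\<bar> * \<bar>B (m - i)\<bar> * (Beta (P i + 1) (Q (m - i) + 1) * t powr (P i + Q (m - i) + 1)))"
        unfolding absA absB h .
    qed
    also have "\<dots> = (-1) ^ m * (pc (g1 + g2) a (b1 + b2) m * t powr (a * real m + (b1 + b2) - 1))"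
      by (simp add: sum_distrib_left[symmetric] inner_abs)
    finally show ?thesis by simp
  qed
  have "((\<lambda>u. (\<Sum>i. A i * (t - u) powr P i) * (\<Sum>k. B k * u powr Q k)) has_integral
          (\<Sum>m. \<Sum>i\<le>m. A i * B (m - i) * (Beta (P i + 1) (Q (m - i) + 1) * t powr (P i + Q (m - i) + 1)))) {0..t}"
  proof (rule conv_series[OF t])
    show "P i > -1" for i unfolding P_def using a b by (simp add: add_nonneg_pos)
    show "Q i > -1" for i unfolding Q_def using a b by (simp add: add_nonneg_pos)
    fix x :: real assume x: "x \<in> {0..t}"
    show "summable (\<lambda>i. \<bar>A i\<bar> * x powr P i)"
      using pfr_sums(2)[OF g(1) a b(1), of x] x unfolding A_def P_def by (simp add: abs_mult)
    show "summable (\<lambda>i. \<bar>B i\<bar> * x powr Q i)"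
      using pfr_sums(2)[OF g(2) a b(2), of x] x unfolding B_def Q_def by (simp add: abs_mult)
  next
    show "summable (\<lambda>m. \<Sum>i\<le>m. \<bar>A i\<bar> * \<bar>B (m - i)\<bar> * (Beta (P i + 1) (Q (m - i) + 1) * t powr (P i + Q (m - i) + 1)))"
    proof -
      have "summable (\<lambda>k. \<bar>pc (g1 + g2) a (b1 + b2) k * (-1) ^ k * t powr (a * real k + (b1 + b2) - 1)\<bar>)"
        using pfr_sums(2)[of "g1 + g2" a "b1 + b2" t] g a b t by simp
      moreover have "\<bar>pc (g1 + g2) a (b1 + b2) k * (-1) ^ k * t powr (a * real k + (b1 + b2) - 1)\<bar>
          = pc (g1 + g2) a (b1 + b2) k * t powr (a * real k + (b1 + b2) - 1)" for k
        using pc_pos[of "g1 + g2" a "b1 + b2" k] g a b by (simp add: abs_mult)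
      ultimately show ?thesis by (simp only: inner_abs)
    qed
  qed
  thus ?thesis unfolding pf1[symmetric] pf2[symmetric] inner pfr_def .
qed


lemma pfr_zero: "pfr g a b 0 = 0" by (simp add: pfr_def)

lemma conv_pow_formula:
  assumes a: "0 < a" "a < 1"
  shows "t \<ge> 0 \<Longrightarrow> conv_pow (phi_ml a) (Suc n) t = complex_of_real (pfr (real (Suc n)) a (a * real (Suc n)) t)"
proof (induction n arbitrary: t)
  case 0
  have "phi_ml a t = complex_of_real (pfr 1 a a t)"
    unfolding phi_ml_def ML2_def using prab_pfr[of 1 a a t] a 0 by simp
  thus ?case by simp
next
  case (Suc n)
  show ?case
  proof (cases "t = 0")
    case True
    thus ?thesis by (simp add: lconv_def pfr_zero)
  next
    case False
    hence t: "t > 0" using Suc.prems by simp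
    have H: "((\<lambda>u. pfr (real (Suc n)) a (a * real (Suc n)) (t - u) * pfr 1 a a u) has_integral
              pfr (real (Suc n) + 1) a (a * real (Suc n) + a) t) {0..t}"
      by (rule pfr_conv) (use a t in auto)
    have H2: "((\<lambda>u. conv_pow (phi_ml a) (Suc n) (t - u) * phi_ml a u) has_integral
              complex_of_real (pfr (real (Suc (Suc n))) a (a * real (Suc (Suc n))) t)) {0..t}"
    proof -
      have eqv: "pfr (real (Suc n) + 1) a (a * real (Suc n) + a) t = pfr (real (Suc (Suc n))) a (a * real (Suc (Suc n))) t"
        by (simp add: algebra_simps)
      show ?thesis
    proof (rule has_integral_eq[OF _ has_integral_of_real[OF H[unfolded eqv]]])
      fix u assume u: "u \<in> {0..t}"
      have "phi_ml a u = complex_of_real (pfr 1 a a u)"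
        unfolding phi_ml_def ML2_def using prab_pfr[of 1 a a u] a u by simp
      thus "complex_of_real (pfr (real (Suc n)) a (a * real (Suc n)) (t - u) * pfr 1 a a u)
          = conv_pow (phi_ml a) (Suc n) (t - u) * phi_ml a u"
        using Suc.IH[of "t - u"] u by simp
    qed
    qed
    thus ?thesis unfolding conv_pow.simps lconv_def by (rule integral_unique)
  qed
qed


lemma double_series:
  fixes c :: "nat \<Rightarrow> real" and w :: complex and T :: "nat \<Rightarrow> complex"
  assumes c0: "\<And>m. c m \<ge> 0" and sc: "summable (\<lambda>m. c m * (1 + norm w) ^ m)"
    and rows: "\<And>n. (\<lambda>k. complex_of_real (c (n + k) * real ((n + k) choose n)) * w ^ n * (-1) ^ k) sums T n"
  shows "T sums (\<Sum>m. complex_of_real (c m) * (w - 1) ^ m)"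
proof -
  define F where "F n k = complex_of_real (c (n + k) * real ((n + k) choose n)) * w ^ n * (-1) ^ k" for n k
  define D where "D = Sigma (UNIV :: nat set) (\<lambda>m. {..m})"
  define g where "g = (\<lambda>(m, n). F n (m - n))"
  define S where "S = (\<Sum>m. complex_of_real (c m) * (w - 1) ^ m)"
  have ng: "norm (g (m, n)) = c m * real (m choose n) * norm w ^ n" if "n \<le> m" for m n
    using that c0[of m] unfolding g_def F_def by (simp add: norm_mult norm_power)
  have absg: "(\<lambda>p. norm (g p)) summable_on D"
    unfolding D_def
  proof (rule summable_on_SigmaI[where g = "\<lambda>m. c m * (1 + norm w) ^ m"])
    fix m :: nat
    have "(\<Sum>n\<le>m. norm (g (m, n))) = c m * (\<Sum>n\<le>m. real (m choose n) * norm w ^ n * 1 ^ (m - n))"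
      by (simp add: ng sum_distrib_left mult_ac)
    also have "\<dots> = c m * (1 + norm w) ^ m" using binomial_ring[of "norm w" 1 m] by (simp add: add.commute)
    finally show "((\<lambda>n. norm (g (m, n))) has_sum c m * (1 + norm w) ^ m) {..m}"
      by (intro has_sum_finiteI) auto
  next
    show "(\<lambda>m. c m * (1 + norm w) ^ m) summable_on UNIV"
      using sc c0 by (subst summable_on_UNIV_nonneg_real_iff) auto
  qed auto
  have sg: "g summable_on D" using absg by (rule abs_summable_summable)
  have nrm: "norm (complex_of_real (c m) * (w - 1) ^ m) \<le> c m * (1 + norm w) ^ m" for m
  proof -
    have "norm (w - 1) \<le> 1 + norm w" using norm_triangle_ineq4[of w 1] by simp
    hence "norm (w - 1) ^ m \<le> (1 + norm w) ^ m" by (intro power_mono) auto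
    thus ?thesis using c0[of m] by (simp add: norm_mult norm_power mult_left_mono)
  qed
  have sn: "summable (\<lambda>m. norm (complex_of_real (c m) * (w - 1) ^ m))"
    by (rule summable_comparison_test[OF _ sc]) (use nrm in auto)
  have outer: "((\<lambda>m. complex_of_real (c m) * (w - 1) ^ m) has_sum S) UNIV"
    unfolding S_def by (intro norm_summable_imp_has_sum sn summable_sums summable_norm_cancel)
  have gD: "(g has_sum S) D"
    unfolding D_def
  proof (rule has_sum_SigmaI[OF _ outer])
    fix m :: nat
    have "(\<Sum>n\<le>m. g (m, n)) = complex_of_real (c m) * (\<Sum>n\<le>m. of_nat (m choose n) * w ^ n * (-1) ^ (m - n))"
      unfolding g_def F_def by (simp add: sum_distrib_left mult_ac)
    also have "\<dots> = complex_of_real (c m) * (w - 1) ^ m"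
      using binomial_ring[of w "-1" m] by simp
    finally show "((\<lambda>n. g (m, n)) has_sum complex_of_real (c m) * (w - 1) ^ m) {..m}"
      by (intro has_sum_finiteI) auto
  qed (use sg D_def in auto)
  have fU: "((\<lambda>(n, k). F n k) has_sum S) (Sigma UNIV (\<lambda>_. UNIV))"
  proof -
    have "((\<lambda>(n, k). F n k) has_sum S) (UNIV \<times> UNIV) = (g has_sum S) D"
      by (rule has_sum_reindex_bij_witness[where i = "\<lambda>(m, n). (n, m - n)" and j = "\<lambda>(n, k). (n + k, n)"])
         (auto simp: D_def g_def)
    thus ?thesis using gD by simp
  qed
  have rowh: "((\<lambda>k. F n k) has_sum T n) UNIV" for n
  proof -
    have "(\<lambda>(n, k). F n k) summable_on Sigma UNIV (\<lambda>_. UNIV)" using fU by (auto simp: summable_on_def)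
    hence "F n summable_on UNIV" by (rule summable_on_SigmaD1) auto
    hence "(F n has_sum infsum (F n) UNIV) UNIV" by (rule has_sum_infsum)
    moreover have "F n sums infsum (F n) UNIV" using calculation by (rule has_sum_imp_sums)
    moreover have "F n sums T n" using rows[of n] unfolding F_def .
    ultimately show ?thesis using sums_unique2 by (metis)
  qed
  have "(T has_sum S) UNIV"
    by (rule has_sum_SigmaD[OF fU]) (use rowh in auto)
  thus ?thesis unfolding S_def by (rule has_sum_imp_sums)
qed


lemma row_coef:
  fixes L a t :: real
  assumes L: "L > 0" and a: "a > 0" and t: "t > 0"
  shows "pochhammer L n / fact n * (pc (L + real n) a (a * (L + real n)) k * t powr (a * real k + a * (L + real n) - 1))
       = pc L a (L * a) (n + k) * t powr (a * real (n + k) + L * a - 1) * real ((n + k) choose n)"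
proof -
  have P: "pochhammer L (n + k) = pochhammer L n * pochhammer (L + real n) k" by (rule pochhammer_product')
  have e1: "a * real k + a * (L + real n) = a * real (n + k) + L * a" by (simp add: algebra_simps)
  have B: "real ((n + k) choose n) = fact (n + k) / (fact n * fact k)" by (simp add: binomial_fact)
  have G: "Gamma (a * real (n + k) + L * a) > 0" using a L by (intro Gamma_real_pos add_nonneg_pos) auto
  show ?thesis unfolding pc_def P B e1 using G by (simp add: field_simps)
qed

lemma main_part1:
  fixes a :: real and l :: nat and w :: complex and t :: real
  assumes a: "0 < a" "a < 1" and l: "l \<ge> 1" and t: "0 < t"
  shows "(\<lambda>n. pochhammer (of_nat l) n / fact n * w ^ n * conv_pow (phi_ml a) (n + l) t)
           sums (complex_of_real (t powr (real l * a - 1))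
                   * prabhakar (real l) a (real l * a) (- (1 - w) * complex_of_real (t powr a)))"
proof -
  define L where "L = real l"
  have L: "L > 0" using l unfolding L_def by simp
  define c where "c m = pc L a (L * a) m * t powr (a * real m + L * a - 1)" for m
  have c0: "c m \<ge> 0" for m unfolding c_def using pc_pos[OF L a(1), of "L * a" m] L a by simp
  have cpow: "c m * r ^ m = t powr (L * a - 1) * (pc L a (L * a) m * (t powr a * r) ^ m)" for m r
    unfolding c_def using powr_comb[of t "L * a" a m] t by (simp add: power_mult_distrib mult_ac)
  have sc: "summable (\<lambda>m. c m * (1 + norm w) ^ m)"
    unfolding cpow by (intro summable_mult pc_summable) (use L a t in auto)
  have rows: "(\<lambda>k. complex_of_real (c (n + k) * real ((n + k) choose n)) * w ^ n * (-1) ^ k) sums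
      (pochhammer (of_nat l) n / fact n * w ^ n * conv_pow (phi_ml a) (n + l) t)" for n
  proof -
    have cp: "conv_pow (phi_ml a) (n + l) t = complex_of_real (pfr (L + real n) a (a * (L + real n)) t)"
    proof -
      have "n + l = Suc (n + l - 1)" using l by simp
      hence "conv_pow (phi_ml a) (n + l) t = complex_of_real (pfr (real (Suc (n + l - 1))) a (a * real (Suc (n + l - 1))) t)"
        using conv_pow_formula[OF a, of t "n + l - 1"] t by simp
      moreover have "real (Suc (n + l - 1)) = L + real n" using l unfolding L_def by simp
      ultimately show ?thesis by simp
    qed
    have s: "(\<lambda>k. pc (L + real n) a (a * (L + real n)) k * (-1) ^ k * t powr (a * real k + a * (L + real n) - 1))
        sums pfr (L + real n) a (a * (L + real n)) t"
      by (rule pfr_sums(1)) (use L a t in \<open>auto intro: add_pos_nonneg\<close>)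
    have s2: "(\<lambda>k. complex_of_real (pochhammer L n / fact n) * w ^ n *
        complex_of_real (pc (L + real n) a (a * (L + real n)) k * (-1) ^ k * t powr (a * real k + a * (L + real n) - 1)))
        sums (complex_of_real (pochhammer L n / fact n) * w ^ n * complex_of_real (pfr (L + real n) a (a * (L + real n)) t))"
      by (intro sums_mult sums_of_real s)
    have eq: "complex_of_real (pochhammer L n / fact n) * w ^ n *
        complex_of_real (pc (L + real n) a (a * (L + real n)) k * (-1) ^ k * t powr (a * real k + a * (L + real n) - 1))
        = complex_of_real (c (n + k) * real ((n + k) choose n)) * w ^ n * (-1) ^ k" for k
    proof -
      have "complex_of_real (pochhammer L n / fact n) *
          complex_of_real (pc (L + real n) a (a * (L + real n)) k * t powr (a * real k + a * (L + real n) - 1))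
          = complex_of_real (c (n + k) * real ((n + k) choose n))"
        unfolding c_def row_coef[OF L a(1) t, symmetric] by simp
      moreover have "complex_of_real (pochhammer L n / fact n) * w ^ n *
        complex_of_real (pc (L + real n) a (a * (L + real n)) k * (-1) ^ k * t powr (a * real k + a * (L + real n) - 1))
        = (complex_of_real (pochhammer L n / fact n) *
          complex_of_real (pc (L + real n) a (a * (L + real n)) k * t powr (a * real k + a * (L + real n) - 1))) * (w ^ n * (-1) ^ k)"
        by (simp only: of_real_mult of_real_power of_real_minus of_real_1 mult_ac)
      ultimately show ?thesis by (simp only: mult_ac)
    qed
    have pl: "pochhammer (of_nat l :: complex) n / fact n = complex_of_real (pochhammer L n / fact n)"
      unfolding L_def by (simp add: pochhammer_of_real[symmetric])
    show ?thesis using s2 unfolding eq pl cp .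
  qed
  have D: "(\<lambda>n. pochhammer (of_nat l) n / fact n * w ^ n * conv_pow (phi_ml a) (n + l) t)
      sums (\<Sum>m. complex_of_real (c m) * (w - 1) ^ m)"
    by (rule double_series[OF c0 sc rows])
  have rhs: "complex_of_real (t powr (real l * a - 1)) * prabhakar (real l) a (real l * a) (- (1 - w) * complex_of_real (t powr a))
      = (\<Sum>m. complex_of_real (c m) * (w - 1) ^ m)"
  proof -
    define K where "K = complex_of_real (t powr (L * a - 1))"
    have K: "K \<noteq> 0" unfolding K_def using t by simp
    have nrm: "norm (complex_of_real (c m) * (w - 1) ^ m) \<le> c m * (1 + norm w) ^ m" for m
    proof -
      have "norm (w - 1) \<le> 1 + norm w" using norm_triangle_ineq4[of w 1] by simp
      hence "norm (w - 1) ^ m \<le> (1 + norm w) ^ m" by (intro power_mono) auto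
      thus ?thesis using c0[of m] by (simp add: norm_mult norm_power mult_left_mono)
    qed
    have sn: "summable (\<lambda>m. complex_of_real (c m) * (w - 1) ^ m)"
      by (rule summable_norm_cancel, rule summable_comparison_test[OF _ sc]) (use nrm in auto)
    have tm: "complex_of_real (c m) * (w - 1) ^ m = K * (pochhammer (complex_of_real L) m * (- (1 - w) * complex_of_real (t powr a)) ^ m
            / (complex_of_real (Gamma (a * real m + L * a)) * fact m))" for m
    proof -
      have "complex_of_real (c m) = complex_of_real (t powr (L * a - 1) * (t powr a) ^ m * (pochhammer L m / (Gamma (a * real m + L * a) * fact m)))"
        unfolding c_def pc_def using powr_comb[of t "L * a" a m] t by (simp add: mult_ac)
      moreover have pw: "(- (1 - w) * complex_of_real (t powr a)) ^ m = (w - 1) ^ m * complex_of_real (t powr a) ^ m"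
        by (simp add: power_mult_distrib[symmetric])
      ultimately show ?thesis unfolding K_def pw by (simp add: pochhammer_of_real[symmetric] field_simps)
    qed
    have "(\<lambda>m. K * (pochhammer (complex_of_real L) m * (- (1 - w) * complex_of_real (t powr a)) ^ m
            / (complex_of_real (Gamma (a * real m + L * a)) * fact m))) sums (\<Sum>m. complex_of_real (c m) * (w - 1) ^ m)"
      using summable_sums[OF sn] unfolding tm .
    hence "(\<lambda>m. pochhammer (complex_of_real L) m * (- (1 - w) * complex_of_real (t powr a)) ^ m
            / (complex_of_real (Gamma (a * real m + L * a)) * fact m)) sums ((\<Sum>m. complex_of_real (c m) * (w - 1) ^ m) / K)"
      using sums_divide[OF \<open>(\<lambda>m. K * _) sums _\<close>, of K] K by simp
    hence "prabhakar L a (L * a) (- (1 - w) * complex_of_real (t powr a)) = (\<Sum>m. complex_of_real (c m) * (w - 1) ^ m) / K"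
      unfolding prabhakar_def by (rule sums_unique[symmetric])
    thus ?thesis using K unfolding K_def L_def by simp
  qed
  show ?thesis unfolding rhs by (rule D)
qed


lemma diffs_iter: "(diffs ^^ m) e k = pochhammer (of_nat k + 1) m * (e (k + m) :: complex)"
proof (induction m arbitrary: k)
  case 0 thus ?case by simp
next
  case (Suc m)
  have "(diffs ^^ Suc m) e k = of_nat (Suc k) * (diffs ^^ m) e (Suc k)" by (simp add: diffs_def)
  also have "\<dots> = of_nat (Suc k) * (pochhammer (of_nat (Suc k) + 1) m * e (Suc k + m))" by (simp add: Suc.IH)
  also have "\<dots> = pochhammer (of_nat k + 1) (Suc m) * e (k + Suc m)"
    by (simp add: pochhammer_rec add_ac)
  finally show ?case .
qed

lemma iter_deriv_powser:
  fixes e :: "nat \<Rightarrow> complex"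
  assumes s: "\<And>z. summable (\<lambda>k. e k * z ^ k)"
  shows "(deriv ^^ m) (\<lambda>z. \<Sum>k. e k * z ^ k) = (\<lambda>z. \<Sum>k. (diffs ^^ m) e k * z ^ k) \<and> (\<forall>z. summable (\<lambda>k. (diffs ^^ m) e k * z ^ k))"
proof (induction m)
  case 0 thus ?case using s by simp
next
  case (Suc m)
  from Suc.IH have eq: "(deriv ^^ m) (\<lambda>z. \<Sum>k. e k * z ^ k) = (\<lambda>z. \<Sum>k. (diffs ^^ m) e k * z ^ k)"
    and sm: "\<And>z. summable (\<lambda>k. (diffs ^^ m) e k * z ^ k)" by auto
  have "(deriv ^^ Suc m) (\<lambda>z. \<Sum>k. e k * z ^ k) = deriv (\<lambda>z. \<Sum>k. (diffs ^^ m) e k * z ^ k)"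
    using eq by simp
  also have "\<dots> = (\<lambda>z. \<Sum>k. diffs ((diffs ^^ m) e) k * z ^ k)"
  proof
    fix z
    show "deriv (\<lambda>z. \<Sum>k. (diffs ^^ m) e k * z ^ k) z = (\<Sum>k. diffs ((diffs ^^ m) e) k * z ^ k)"
      by (rule DERIV_imp_deriv, rule termdiffs_strong_converges_everywhere) (rule sm)
  qed
  finally show ?case using termdiff_converges_all[of "(diffs ^^ m) e", OF sm] by simp
qed

lemma ML2_powser:
  assumes a: "0 < a" "a < 1"
  shows "ML2 a a = (\<lambda>z. \<Sum>k. complex_of_real (pc 1 a a k) * z ^ k)"
    and "\<And>z. summable (\<lambda>k. complex_of_real (pc 1 a a k) * z ^ k)"
proof -
  show "ML2 a a = (\<lambda>z. \<Sum>k. complex_of_real (pc 1 a a k) * z ^ k)"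
    unfolding ML2_def prabhakar_def pc_def
    by (intro ext suminf_cong) (simp add: pochhammer_fact[symmetric] pochhammer_of_real[symmetric])
  fix z :: complex
  have "summable (\<lambda>k. pc 1 a a k * norm z ^ k)" by (rule pc_summable) (use a in auto)
  hence "summable (\<lambda>k. norm (complex_of_real (pc 1 a a k) * z ^ k))"
    using pc_pos[of 1 a a] a by (simp add: norm_mult norm_power abs_of_pos)
  thus "summable (\<lambda>k. complex_of_real (pc 1 a a k) * z ^ k)" by (rule summable_norm_cancel)
qed

lemma deriv_ML2:
  assumes a: "0 < a" "a < 1"
  shows "(deriv ^^ m) (ML2 a a) z = fact m * prabhakar (real m + 1) a (a * (real m + 1)) z"
proof -
  define e where "e k = complex_of_real (pc 1 a a k)" for k
  have I: "(deriv ^^ m) (ML2 a a) = (\<lambda>z. \<Sum>k. (diffs ^^ m) e k * z ^ k)"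
      and S: "summable (\<lambda>k. (diffs ^^ m) e k * z ^ k)"
    using iter_deriv_powser[of e m] ML2_powser[OF a] unfolding e_def by auto
  define p where "p k = pochhammer (complex_of_real (real m + 1)) k * z ^ k
            / (complex_of_real (Gamma (a * real k + a * (real m + 1))) * fact k)" for k
  have tm: "(diffs ^^ m) e k * z ^ k = fact m * p k" for k
  proof -
    have f1: "pochhammer (real k + 1) m * fact k = pochhammer (real m + 1) k * fact m"
      using pochhammer_product'[of "1::real" k m] pochhammer_product'[of "1::real" m k]
      by (simp add: pochhammer_fact[symmetric] add_ac mult_ac)
    have g: "a * real (k + m) + a = a * real k + a * (real m + 1)" by (simp add: algebra_simps)
    have G: "Gamma (a * real k + a * (real m + 1)) > 0" using a by (intro Gamma_real_pos add_nonneg_pos) auto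
    have "pochhammer (real k + 1) m * pc 1 a a (k + m) = fact m * (pochhammer (real m + 1) k / (Gamma (a * real k + a * (real m + 1)) * fact k))"
      unfolding pc_def g using G f1 by (simp add: pochhammer_fact[symmetric] field_simps)
    hence "complex_of_real (pochhammer (real k + 1) m * pc 1 a a (k + m)) = complex_of_real (fact m * (pochhammer (real m + 1) k / (Gamma (a * real k + a * (real m + 1)) * fact k)))"
      by simp
    thus ?thesis unfolding diffs_iter e_def p_def
      by (simp add: pochhammer_of_real[symmetric] field_simps)
  qed
  have sp: "summable p"
  proof -
    have "summable (\<lambda>k. (diffs ^^ m) e k * z ^ k / fact m)" using S by (rule summable_divide)
    thus ?thesis unfolding tm by simp
  qed
  have "(deriv ^^ m) (ML2 a a) z = (\<Sum>k. fact m * p k)" unfolding I tm ..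
  also have "\<dots> = fact m * (\<Sum>k. p k)" by (rule suminf_mult[OF sp])
  also have "(\<Sum>k. p k) = prabhakar (real m + 1) a (a * (real m + 1)) z" unfolding p_def prabhakar_def ..
  finally show ?thesis .
qed


theorem mainTheorem9:
  fixes \<alpha> :: real and l :: nat and w :: complex and t :: real
  assumes "0 < \<alpha>" and "\<alpha> < 1" and "l \<ge> 1" and "norm w \<le> 1" and "0 < t"
  shows "(\<lambda>n. pochhammer (of_nat l) n / fact n * w ^ n * conv_pow (phi_ml \<alpha>) (n + l) t)
           sums (complex_of_real (t powr (real l * \<alpha> - 1))
                   * prabhakar (real l) \<alpha> (real l * \<alpha>) (- (1 - w) * complex_of_real (t powr \<alpha>)))
         \<and> (\<lambda>n. pochhammer (of_nat l) n / fact n * w ^ n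
              * (complex_of_real (t powr (\<alpha> * real l - 1) * t powr (\<alpha> * real n)) / fact (n + l - 1))
              * (deriv ^^ (n + l - 1)) (ML2 \<alpha> \<alpha>) (- complex_of_real (t powr \<alpha>)))
           sums (complex_of_real (t powr (real l * \<alpha> - 1))
                   * prabhakar (real l) \<alpha> (real l * \<alpha>) (- (1 - w) * complex_of_real (t powr \<alpha>)))"
proof -
  have a: "0 < \<alpha>" "\<alpha> < 1" using assms by auto
  have t: "t > 0" using assms by simp
  note P1 = main_part1[OF a \<open>l \<ge> 1\<close> t, of w]
  have eq: "pochhammer (of_nat l) n / fact n * w ^ n
              * (complex_of_real (t powr (\<alpha> * real l - 1) * t powr (\<alpha> * real n)) / fact (n + l - 1))
              * (deriv ^^ (n + l - 1)) (ML2 \<alpha> \<alpha>) (- complex_of_real (t powr \<alpha>))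
          = pochhammer (of_nat l) n / fact n * w ^ n * conv_pow (phi_ml \<alpha>) (n + l) t" for n
  proof -
    define M where "M = n + l - 1"
    have M: "n + l = Suc M" "real M + 1 = real n + real l" using \<open>l \<ge> 1\<close> unfolding M_def by auto
    have tp: "t powr (\<alpha> * real l - 1) * t powr (\<alpha> * real n) = t powr (\<alpha> * (real M + 1) - 1)"
      using t M(2) by (simp add: powr_add[symmetric] algebra_simps)
    have cp: "conv_pow (phi_ml \<alpha>) (n + l) t = complex_of_real (t powr (\<alpha> * (real M + 1) - 1))
              * prabhakar (real M + 1) \<alpha> (\<alpha> * (real M + 1)) (- complex_of_real (t powr \<alpha>))"
    proof -
      have "conv_pow (phi_ml \<alpha>) (n + l) t = complex_of_real (pfr (real (Suc M)) \<alpha> (\<alpha> * real (Suc M)) t)"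
        unfolding M(1) by (rule conv_pow_formula[OF a]) (use t in simp)
      also have "\<dots> = complex_of_real (t powr (\<alpha> * (real M + 1) - 1))
              * prabhakar (real M + 1) \<alpha> (\<alpha> * (real M + 1)) (- complex_of_real (t powr \<alpha>))"
        using prab_pfr[of "real M + 1" \<alpha> "\<alpha> * (real M + 1)" t] a t by (simp add: add_nonneg_pos add.commute)
      finally show ?thesis .
    qed
    show ?thesis unfolding cp M_def[symmetric] deriv_ML2[OF a] tp by simp
  qed
  show ?thesis using P1 unfolding eq by simp
qed

end
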